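(* Let $c>0$ be a constant, let $b_0\in(\pi/2,\pi)$ be the smallest positive solution of $cb+\tan b=0$, set $\alpha_0=1/|\cos b_0|$, and let $\alpha>\alpha_0$. Then the stationary system $$(c\bar u)'=\frac{\alpha\bar v}{1+\bar u+\bar v}-\bar u,\qquad -(c\bar v)'=\frac{\alpha\bar u}{1+\bar u+\bar v}-\bar v\quad\text{on }[0,1],$$ with boundary conditions $\bar u(0)=0$, $\bar v(1)=0$, has a nontrivial solution.
   Context: This is the stationary version of the system $\partial_t u+\partial_x(cu)=\frac{\alpha v}{1+u+v}-u$, $\partial_t v-\partial_x(cv)=\frac{\alpha u}{1+u+v}-v$ with Dirichlet-type boundary conditions (DBC) $u(0,t)=0$, $v(1,t)=0$. *)

theory Defs
  imports Complex_Main
begin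

end

theory Submission imports Defs "HOL-Analysis.Analysis" begin

lemma F_deriv_raw: "w > -(1+a) \<Longrightarrow> a > 1 \<Longrightarrow> ((\<lambda>w. - (w^2)/2 + 2*a*w - 2*a*(1+a)*ln((w+1+a)/(1+a))) has_real_derivative w*(a-1-w)/(w+1+a)) (at w)"
  apply (rule derivative_eq_intros refl | simp)+
  apply (simp add: divide_simps)
  apply (simp add: algebra_simps)
  done

lemma arcsin_int: assumes "\<beta> > 1"
  shows "((\<lambda>s. 1/sqrt(\<beta>^2-s^2)) has_integral (2*arcsin(1/\<beta>))) {-1..1}"
proof -
  have "((\<lambda>s. 1/sqrt(\<beta>^2-s^2)) has_integral ((\<lambda>s. arcsin(s/\<beta>)) 1 - (\<lambda>s. arcsin(s/\<beta>)) (-1))) {-1..1}"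
  proof (rule fundamental_theorem_of_calculus)
    show "-1 \<le> (1::real)" by simp
    fix x :: real assume "x \<in> {-1..1}"
    then have x: "-1 \<le> x" "x \<le> 1" by auto
    have xb: "-1 < x/\<beta>" "x/\<beta> < 1" using x assms by (auto simp: divide_simps)
    have d: "((\<lambda>s. arcsin(s/\<beta>)) has_real_derivative (inverse (sqrt (1 - (x/\<beta>)\<^sup>2)) * (1/\<beta>))) (at x)"
    proof -
      have "((\<lambda>s. s/\<beta>) has_real_derivative 1/\<beta>) (at x)" using assms by (auto intro!: derivative_eq_intros)
      from DERIV_chain2[OF DERIV_arcsin[OF xb] this] show ?thesis .
    qed
    have "x^2 \<le> 1" using abs_le_square_iff[of x 1] x by (simp add: abs_le_iff)
    moreover have "1 < \<beta>^2" using assms by (simp add: one_less_power)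
    ultimately have "x^2 < \<beta>^2" by linarith
    then have eq: "inverse (sqrt (1 - (x/\<beta>)\<^sup>2)) * (1/\<beta>) = 1/sqrt(\<beta>^2-x^2)"
    proof -
      have "sqrt (1 - (x/\<beta>)\<^sup>2) * \<beta> = sqrt (1 - (x/\<beta>)\<^sup>2) * sqrt (\<beta>^2)" using assms by simp
      also have "\<dots> = sqrt ((1 - (x/\<beta>)\<^sup>2) * \<beta>^2)" by (simp add: real_sqrt_mult)
      also have "(1 - (x/\<beta>)\<^sup>2) * \<beta>^2 = \<beta>^2 - x^2" using assms by (simp add: field_simps)
      finally have "sqrt (1 - (x/\<beta>)\<^sup>2) * \<beta> = sqrt (\<beta>^2 - x^2)" .
      then show ?thesis by (simp add: divide_inverse mult.commute flip: inverse_mult_distrib)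
    qed
    show "((\<lambda>s. arcsin(s/\<beta>)) has_vector_derivative 1/sqrt(\<beta>^2-x^2)) (at x within {-1..1})"
      using has_field_derivative_at_within[OF d[unfolded eq]] by (simp add: has_real_derivative_iff_has_vector_derivative)
  qed
  moreover have "(\<lambda>s. arcsin(s/\<beta>)) 1 - (\<lambda>s. arcsin(s/\<beta>)) (-1) = 2*arcsin(1/\<beta>)"
  proof -
    have "0 < 1/\<beta>" "1/\<beta> \<le> 1" using assms by auto
    then have "-1 \<le> 1/\<beta>" by linarith
    then have "arcsin (-(1/\<beta>)) = - arcsin(1/\<beta>)" using \<open>1/\<beta> \<le> 1\<close> by (intro arcsin_minus) auto
    then show ?thesis by simp
  qed
  ultimately show ?thesis by metis
qed

lemma alg1g: fixes w a c m s p q r :: real assumes nz: "w \<noteq> 0" "q \<noteq> 0" "p \<noteq> 0" "r \<noteq> 0" "m \<noteq> 0" "c \<noteq> 0"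
  and e: "p = 1+w" "q = a-1-w" "r = w+1+a" shows
 "c*((inverse (w*q/r) * (-(m^2 * s) * inverse (m*c*p/(q*w))) + m * inverse (m*c*p/(q*w)))/2) = a*((w - m * s)/2)/(1 + (w+m * s)/2 + (w-m * s)/2) - (w+m * s)/2"
 "-(c*((inverse (w*q/r) * (-(m^2 * s) * inverse (m*c*p/(q*w))) - m * inverse (m*c*p/(q*w)))/2)) = a*((w + m * s)/2)/(1 + (w+m * s)/2 + (w-m * s)/2) - (w-m * s)/2"
proof -
  have d: "1 + (w+m * s)/2 + (w-m * s)/2 = p" using e by (simp add: field_simps)
  show "c*((inverse (w*q/r) * (-(m^2 * s) * inverse (m*c*p/(q*w))) + m * inverse (m*c*p/(q*w)))/2) = a*((w - m * s)/2)/(1 + (w+m * s)/2 + (w-m * s)/2) - (w+m * s)/2"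
    unfolding d using nz apply (simp add: field_simps power2_eq_square) unfolding e by algebra
  show "-(c*((inverse (w*q/r) * (-(m^2 * s) * inverse (m*c*p/(q*w))) - m * inverse (m*c*p/(q*w)))/2)) = a*((w + m * s)/2)/(1 + (w+m * s)/2 + (w-m * s)/2) - (w-m * s)/2"
    unfolding d using nz apply (simp add: field_simps power2_eq_square) unfolding e by algebra
qed

locale sys = fixes a c :: real assumes a_gt: "a > 1" and c_pos: "c > 0"
begin

definition F :: "real \<Rightarrow> real" where
  "F w = - (w^2)/2 + 2*a*w - 2*a*(1+a)*ln((w+1+a)/(1+a))"

definition F' :: "real \<Rightarrow> real" where
  "F' w = w*(a-1-w)/(w+1+a)"

lemma F_deriv: assumes "w > -(1+a)" shows "(F has_real_derivative F' w) (at w)"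
  unfolding F_def[abs_def] F'_def using F_deriv_raw[OF assms a_gt] by simp

lemma F0: "F 0 = 0" unfolding F_def using a_gt by simp

lemma F_cont: "continuous_on {0..a-1} F"
  using F_deriv a_gt by (intro DERIV_continuous_on[where D=F']) (auto intro!: has_field_derivative_at_within F_deriv)

lemma F_strict: assumes "0 \<le> x" "x < y" "y \<le> a-1" shows "F x < F y"
proof (rule DERIV_pos_imp_increasing_open[OF assms(2)])
  fix t assume "x < t" "t < y"
  then show "\<exists>d. (F has_real_derivative d) (at t) \<and> d > 0"
  proof -
    have "F' t > 0" using assms a_gt \<open>x<t\<close> \<open>t<y\<close> unfolding F'_def by (auto intro!: divide_pos_pos)
    moreover have "(F has_real_derivative F' t) (at t)" using assms a_gt \<open>x<t\<close> by (intro F_deriv) auto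
    ultimately show ?thesis by blast
  qed
next
  show "continuous_on {x..y} F" by (rule continuous_on_subset[OF F_cont]) (use assms in auto)
qed

lemma F_mono: assumes "0 \<le> x" "x \<le> y" "y \<le> a-1" shows "F x \<le> F y"
  using F_strict assms by (cases "x = y") (auto intro: less_imp_le)

lemma F_pos: assumes "0 < x" "x \<le> a-1" shows "F x > 0"
  using F_strict[of 0 x] assms F0 by simp

definition K0 where "K0 = (a-1)/(2*(1+a))"
definition kp where "kp W = (a-1-W)/(2*(1+a+W))"

lemma F_upper: assumes "0 \<le> w" shows "F w \<le> K0 * w^2"
proof -
  have "(\<lambda>t. K0*t^2 - F t) 0 \<le> (\<lambda>t. K0*t^2 - F t) w"
  proof (rule DERIV_nonneg_imp_nondecreasing[OF assms])
    fix t assume t: "0 \<le> t" "t \<le> w"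
    have d: "((\<lambda>t. K0*t^2 - F t) has_real_derivative (K0*(2*t) - F' t)) (at t)"
      using t a_gt by (auto intro!: derivative_eq_intros F_deriv)
    have "F' t \<le> K0*(2*t)"
    proof -
      have "t*(a-1-t)/(t+1+a) \<le> t*(a-1)/(1+a)"
      proof -
        have "t*(a-1-t)/(t+1+a) \<le> t*(a-1)/(t+1+a)"
          using t a_gt by (intro divide_right_mono mult_left_mono) auto
        also have "\<dots> \<le> t*(a-1)/(1+a)"
          using t a_gt by (intro divide_left_mono) auto
        finally show ?thesis .
      qed
      moreover have "K0*(2*t) = t*(a-1)/(1+a)" unfolding K0_def using a_gt by (simp add: field_simps)
      ultimately show ?thesis unfolding F'_def by simp
    qed
    then show "\<exists>y. ((\<lambda>t. K0*t^2 - F t) has_real_derivative y) (at t) \<and> 0 \<le> y"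
      using d by auto
  qed
  then show ?thesis using F0 by simp
qed

lemma F_lower: assumes "0 \<le> w" "w \<le> W" "W < a-1" shows "kp W * w^2 \<le> F w"
proof -
  have "(\<lambda>t. F t - kp W*t^2) 0 \<le> (\<lambda>t. F t - kp W*t^2) w"
  proof (rule DERIV_nonneg_imp_nondecreasing[OF assms(1)])
    fix t assume t: "0 \<le> t" "t \<le> w"
    have d: "((\<lambda>t. F t - kp W*t^2) has_real_derivative (F' t - kp W*(2*t))) (at t)"
      using t a_gt by (auto intro!: derivative_eq_intros F_deriv)
    have "(a-1-W)/(1+a+W) \<le> (a-1-t)/(t+1+a)"
    proof -
      have "(a-1-W)*(t+1+a) \<le> (a-1-t)*(1+a+W)"
      proof -
        have "(a-1-t)*(1+a+W) - (a-1-W)*(t+1+a) = (W - t)*(2*a)" by (simp add: algebra_simps)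
        moreover have "(W-t)*(2*a) \<ge> 0" using t assms a_gt by simp
        ultimately show ?thesis by linarith
      qed
      then show ?thesis using t assms a_gt by (simp add: divide_simps)
    qed
    then have "t*((a-1-W)/(1+a+W)) \<le> t*((a-1-t)/(t+1+a))" using t by (intro mult_left_mono) auto
    moreover have "kp W*(2*t) = t*((a-1-W)/(1+a+W))" unfolding kp_def using a_gt assms t by (simp add: field_simps)
    ultimately have "kp W*(2*t) \<le> F' t" unfolding F'_def by simp
    then show "\<exists>y. ((\<lambda>t. F t - kp W*t^2) has_real_derivative y) (at t) \<and> 0 \<le> y"
      using d by auto
  qed
  then show ?thesis using F0 by simp
qed

lemma F_top: assumes "0 < ml" "ml \<le> w" "w \<le> a-1"
  shows "ml/(2*(2*a)) * (a-1-w)^2 \<le> F (a-1) - F w"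
proof -
  let ?D = "\<lambda>t. F t + ml/(2*(2*a)) * (a-1-t)^2"
  have "?D w \<le> ?D (a-1)"
  proof (rule DERIV_nonneg_imp_nondecreasing[OF assms(3)])
    fix t assume t: "w \<le> t" "t \<le> a-1"
    have d: "(?D has_real_derivative (F' t + ml/(2*(2*a)) * (2*(a-1-t)*(-1)))) (at t)"
      using t assms a_gt by (auto intro!: derivative_eq_intros F_deriv)
    have "ml*(t+1+a) \<le> t*(2*a)" using t assms a_gt by (intro mult_mono) auto
    then have "ml/(2*a) \<le> t/(t+1+a)"
      using t assms a_gt by (simp add: divide_simps)
    then have "(a-1-t)*(ml/(2*a)) \<le> (a-1-t)*(t/(t+1+a))" using t by (intro mult_left_mono) auto
    moreover have "ml/(2*(2*a)) * (2*(a-1-t)*(-1)) = - ((a-1-t)*(ml/(2*a)))" using a_gt by (simp add: divide_simps) (simp add: algebra_simps)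
    moreover have "F' t = (a-1-t)*(t/(t+1+a))" unfolding F'_def by simp
    ultimately have "0 \<le> F' t + ml/(2*(2*a)) * (2*(a-1-t)*(-1))" by linarith
    then show "\<exists>y. (?D has_real_derivative y) (at t) \<and> 0 \<le> y" using d by blast
  qed
  then show ?thesis by simp
qed


definition "Fa = F (a-1)"
definition "Finv y = the_inv_into {0..a-1} F y"

lemma Fa_pos: "Fa > 0" unfolding Fa_def using F_pos a_gt by simp

lemma inj_F: "inj_on F {0..a-1}"
proof (rule inj_onI)
  fix x y assume "x \<in> {0..a-1}" "y \<in> {0..a-1}" "F x = F y"
  then show "x = y" using F_strict[of x y] F_strict[of y x] by (cases x y rule: linorder_cases) auto
qed

lemma F_image: "F ` {0..a-1} = {0..Fa}"
proof
  show "F ` {0..a-1} \<subseteq> {0..Fa}" unfolding Fa_def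
  proof
    fix y assume "y \<in> F ` {0..a-1}"
    then obtain x where x: "x \<in> {0..a-1}" "y = F x" by auto
    then have "F 0 \<le> F x" "F x \<le> F (a-1)" using F_mono[of 0 x] F_mono[of x "a-1"] by auto
    then show "y \<in> {0..F (a-1)}" using x F0 by auto
  qed
next
  show "{0..Fa} \<subseteq> F ` {0..a-1}"
  proof
    fix y assume "y \<in> {0..Fa}"
    then obtain x where "0 \<le> x" "x \<le> a-1" "F x = y"
      using IVT'[of F 0 y "a-1", OF _ _ _ F_cont] F0 a_gt unfolding Fa_def by auto
    then show "y \<in> F ` {0..a-1}" by auto
  qed
qed

lemma Finv_props: assumes "y \<in> {0..Fa}" shows "Finv y \<in> {0..a-1}" "F (Finv y) = y"
  using assms F_image inj_F unfolding Finv_def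
  by (metis the_inv_into_into order_refl, metis f_the_inv_into_f)

lemma Finv_F: assumes "w \<in> {0..a-1}" shows "Finv (F w) = w"
  using assms inj_F unfolding Finv_def by (simp add: the_inv_into_f_f)

lemma Finv_open: assumes "0 < y" "y < Fa" shows "0 < Finv y" "Finv y < a-1"
proof -
  have y: "y \<in> {0..Fa}" using assms by auto
  from Finv_props[OF y] have "Finv y \<noteq> 0" using assms F0 by auto
  then show "0 < Finv y" using Finv_props[OF y] by auto
  from Finv_props[OF y] have "Finv y \<noteq> a-1" using assms unfolding Fa_def by auto
  then show "Finv y < a-1" using Finv_props[OF y] by auto
qed

lemma Finv_mono: assumes "0 \<le> y1" "y1 \<le> y2" "y2 \<le> Fa" shows "Finv y1 \<le> Finv y2"
proof (rule ccontr)
  assume "\<not> ?thesis"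
  then have "Finv y2 < Finv y1" by simp
  moreover have "Finv y1 \<in> {0..a-1}" "Finv y2 \<in> {0..a-1}" "F (Finv y1) = y1" "F (Finv y2) = y2"
    using Finv_props assms by auto
  ultimately have "y2 < y1" using F_strict[of "Finv y2" "Finv y1"] by auto
  then show False using assms by simp
qed

lemma Finv_cont: "continuous_on {0..Fa} Finv"
proof -
  have "continuous_on (F ` {0..a-1}) Finv"
    by (rule continuous_on_inv[OF F_cont]) (auto simp: Finv_F)
  then show ?thesis using F_image by simp
qed

lemma Finv_deriv: assumes "0 < y" "y < Fa"
  shows "(Finv has_real_derivative inverse (F' (Finv y))) (at y)"
proof (rule DERIV_inverse_function[where f=F and a=0 and b=Fa])
  show "(F has_real_derivative F' (Finv y)) (at (Finv y))"
    using Finv_open[OF assms] a_gt by (intro F_deriv) auto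
  show "F' (Finv y) \<noteq> 0" using Finv_open[OF assms] a_gt unfolding F'_def by auto
  show "0 < y" "y < Fa" by fact+
  show "\<And>z. 0 < z \<Longrightarrow> z < Fa \<Longrightarrow> F (Finv z) = z" using Finv_props by auto
  show "isCont Finv y" using Finv_cont assms
    by (intro continuous_on_interior[of "{0..Fa}"]) auto
qed

definition "E m = m^2/2 + F m"

lemma E_strict: assumes "0 \<le> x" "x < y" "y \<le> a-1" shows "E x < E y"
proof -
  have "x^2 < y^2" using assms by (intro power_strict_mono) auto
  then show ?thesis unfolding E_def using F_strict[OF assms] by simp
qed

lemma E_cont: "continuous_on {0..a-1} E"
  unfolding E_def by (intro continuous_intros F_cont) auto

lemma E0: "E 0 = 0" unfolding E_def F0 by simp

lemma ms_ex: "\<exists>ms. 0 < ms \<and> ms < a-1 \<and> E ms = Fa"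
proof -
  have "E (a-1) > Fa" unfolding E_def Fa_def using a_gt by simp
  then obtain x where x: "0 \<le> x" "x \<le> a-1" "E x = Fa"
    using IVT'[of E 0 Fa "a-1", OF _ _ _ E_cont] E0 Fa_pos a_gt by auto
  then have "x \<noteq> 0" "x \<noteq> a-1" using E0 Fa_pos \<open>E (a-1) > Fa\<close> by auto
  then show ?thesis using x by (intro exI[of _ x]) auto
qed


definition Y :: "real \<Rightarrow> real \<Rightarrow> real" where "Y m s = E m - m^2 * s^2/2"
definition Q :: "real \<Rightarrow> real \<Rightarrow> real" where "Q m s = m*c*(1 + Finv (Y m s)) / ((a-1 - Finv (Y m s)) * Finv (Y m s))"
definition T :: "real \<Rightarrow> real" where "T m = integral {-1..1} (Q m)"

lemma Y_range: assumes "0 < m" "m < a-1" "E m < Fa" "\<bar>s\<bar> \<le> 1"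
  shows "F m \<le> Y m s" "Y m s \<le> E m" "0 < Y m s" "Y m s < Fa"
    "m \<le> Finv (Y m s)" "Finv (Y m s) < a-1" "F (Finv (Y m s)) = Y m s"
proof -
  have "s^2 \<le> 1" using abs_le_square_iff[of s 1] assms(4) by simp
  then have "m^2 * s^2 \<le> m^2" by (simp add: mult_left_le)
  then show "F m \<le> Y m s" unfolding Y_def E_def by simp
  show "Y m s \<le> E m" unfolding Y_def by simp
  show "0 < Y m s" using F_pos[of m] assms \<open>F m \<le> Y m s\<close> by simp
  show "Y m s < Fa" using assms \<open>Y m s \<le> E m\<close> by simp
  have "Finv (F m) \<le> Finv (Y m s)"
    using F_pos[of m] assms \<open>F m \<le> Y m s\<close> \<open>Y m s < Fa\<close> by (intro Finv_mono) auto
  then show "m \<le> Finv (Y m s)" using Finv_F[of m] assms by simp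
  show "Finv (Y m s) < a-1" using Finv_open \<open>0 < Y m s\<close> \<open>Y m s < Fa\<close> by simp
  show "F (Finv (Y m s)) = Y m s" using Finv_props \<open>0 < Y m s\<close> \<open>Y m s < Fa\<close> by simp
qed

lemma E_mono: assumes "0 \<le> x" "x \<le> y" "y \<le> a-1" shows "E x \<le> E y"
  using E_strict[of x y] assms by (cases "x = y") auto

lemma Q_cont2: assumes "0 < m1" "m1 \<le> m2" "m2 < a-1" "E m2 < Fa"
  shows "continuous_on ({m1..m2} \<times> cbox (-1::real) 1) (\<lambda>(m,s). Q m s)"
proof -
  let ?S = "{m1..m2} \<times> cbox (-1::real) 1"
  have Srange: "0 < fst p" "fst p < a-1" "E (fst p) < Fa" "\<bar>snd p\<bar> \<le> 1" if "p \<in> ?S" for p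
  proof -
    show "0 < fst p" "fst p < a-1" "\<bar>snd p\<bar> \<le> 1" using that assms by auto
    have "E (fst p) \<le> E m2" using that assms by (intro E_mono) auto
    then show "E (fst p) < Fa" using assms by simp
  qed
  have cY: "continuous_on ?S (\<lambda>p. Y (fst p) (snd p))"
  proof -
    have "continuous_on ?S (\<lambda>p. E (fst p))"
      by (rule continuous_on_compose2[OF E_cont]) (use assms in \<open>auto intro!: continuous_intros\<close>)
    then show ?thesis unfolding Y_def by (intro continuous_intros) auto
  qed
  have cG: "continuous_on ?S (\<lambda>p. Finv (Y (fst p) (snd p)))"
  proof (rule continuous_on_compose2[OF Finv_cont cY])
    show "(\<lambda>p. Y (fst p) (snd p)) ` ?S \<subseteq> {0..Fa}"
    proof
      fix y assume "y \<in> (\<lambda>p. Y (fst p) (snd p)) ` ?S"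
      then obtain p where p: "p \<in> ?S" "y = Y (fst p) (snd p)" by blast
      from Y_range[OF Srange[OF p(1)]] show "y \<in> {0..Fa}" using p(2) by simp
    qed
  qed
  have "continuous_on ?S (\<lambda>p. fst p*c*(1 + Finv (Y (fst p) (snd p))) / ((a-1 - Finv (Y (fst p) (snd p))) * Finv (Y (fst p) (snd p))))"
  proof -
    have nz: "\<forall>p\<in>?S. (a-1 - Finv (Y (fst p) (snd p))) * Finv (Y (fst p) (snd p)) \<noteq> 0"
    proof
      fix p assume "p \<in> ?S"
      from Y_range[OF Srange[OF this]] Srange[OF this]
      show "(a-1 - Finv (Y (fst p) (snd p))) * Finv (Y (fst p) (snd p)) \<noteq> 0" by auto
    qed
    show ?thesis by (rule continuous_on_divide[OF _ _ nz]) (intro continuous_intros cG)+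
  qed
  then show "continuous_on ?S (\<lambda>(m,s). Q m s)" unfolding Q_def by (simp add: case_prod_beta)
qed

lemma T_cont: assumes "0 < m1" "m1 \<le> m2" "m2 < a-1" "E m2 < Fa"
  shows "continuous_on {m1..m2} T"
  using integral_continuous_on_param[OF Q_cont2[OF assms]] unfolding T_def by simp

lemma Q_cont1: assumes "0 < m" "m < a-1" "E m < Fa"
  shows "continuous_on {-1..1} (Q m)"
proof -
  have "continuous_on {-1..1} ((\<lambda>(m,s). Q m s) \<circ> (\<lambda>s. (m,s)))"
    by (rule continuous_on_compose[OF _ continuous_on_subset[OF Q_cont2[of m m]]])
      (use assms in \<open>auto intro!: continuous_intros\<close>)
  then show ?thesis by (simp add: o_def)
qed


definition "Bd W = c*(1+W)/(a-1-W) * sqrt(2*K0) * (2*arcsin(1/sqrt(1+2*kp W)))"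

lemma T_upper: assumes "0 < m" "m < a-1" "0 < W0" "W0 < a-1" "E m \<le> F W0"
  shows "T m \<le> Bd W0"
proof -
  have "m^2/2 > 0" using assms by simp
  then have FmW: "F m < F W0" using assms unfolding E_def by linarith
  have mW: "m < W0" using F_mono[of W0 m] FmW assms by (cases "m < W0") auto
  have EFa: "E m < Fa" using assms F_strict[of W0 "a-1"] unfolding Fa_def by simp
  define \<beta> where "\<beta> = sqrt(1+2*kp W0)"
  have kp_pos: "kp W0 > 0" unfolding kp_def using assms by (auto intro!: divide_pos_pos)
  have K0_pos: "K0 > 0" unfolding K0_def using a_gt by (auto intro!: divide_pos_pos)
  have b1: "\<beta> > 1" unfolding \<beta>_def using kp_pos by simp
  have b2: "\<beta>^2 = 1+2*kp W0" unfolding \<beta>_def using kp_pos by simp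
  define C where "C = c*(1+W0)/(a-1-W0) * sqrt(2*K0)"
  have int: "((\<lambda>s. C * (1/sqrt(\<beta>^2-s^2))) has_integral (C * (2*arcsin(1/\<beta>)))) {-1..1}"
    by (rule has_integral_mult_right[OF arcsin_int[OF b1]])
  have BdC: "Bd W0 = C * (2*arcsin(1/\<beta>))" unfolding Bd_def C_def \<beta>_def by simp
  have bound: "Q m s \<le> C * (1/sqrt(\<beta>^2-s^2))" if s: "s \<in> {-1..1}" for s
  proof -
    have sa: "\<bar>s\<bar> \<le> 1" using s by auto
    note YR = Y_range[OF assms(1,2) EFa sa]
    define w where "w = Finv (Y m s)"
    have w1: "m \<le> w" "w < a-1" "F w = Y m s" using YR unfolding w_def by auto
    have "Finv (Y m s) \<le> Finv (F W0)"
      using YR assms F_pos[of W0] EFa by (intro Finv_mono) (auto simp: Fa_def intro: F_mono)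
    then have wW: "w \<le> W0" unfolding w_def using Finv_F[of W0] assms by simp
    have s2: "s^2 \<le> 1" using abs_le_square_iff[of s 1] sa by simp
    have "m^2*(\<beta>^2 - s^2)/2 \<le> K0 * w^2"
    proof -
      have "kp W0 * m^2 \<le> F m" using F_lower[of m W0] mW assms by simp
      moreover have "m^2*(\<beta>^2 - s^2)/2 = m^2/2 + kp W0 * m^2 - m^2 * s^2/2" unfolding b2 by (simp add: field_simps)
      ultimately have "m^2*(\<beta>^2 - s^2)/2 \<le> Y m s" unfolding Y_def E_def by linarith
      also have "\<dots> = F w" using w1 by simp
      also have "\<dots> \<le> K0 * w^2" using F_upper[of w] w1 assms by simp
      finally show ?thesis .
    qed
    have bs: "\<beta>^2 - s^2 > 0" using one_less_power[OF b1, of 2] s2 by linarith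
    have "m^2 \<le> w^2 * (2*K0/(\<beta>^2 - s^2))"
      using \<open>m^2*(\<beta>^2 - s^2)/2 \<le> K0 * w^2\<close> bs by (simp add: field_simps)
    then have "sqrt(m^2) \<le> sqrt(w^2 * (2*K0/(\<beta>^2 - s^2)))" by (rule real_sqrt_le_mono)
    then have "m \<le> w * (sqrt(2*K0)/sqrt(\<beta>^2 - s^2))"
      using assms w1 bs by (simp add: real_sqrt_mult real_sqrt_divide divide_simps)
    then have mw: "m / w \<le> sqrt(2*K0) * (1/sqrt(\<beta>^2 - s^2))"
      using assms w1 bs by (simp add: divide_simps mult.commute)
    have r: "(1+w)/(a-1-w) \<le> (1+W0)/(a-1-W0)"
      using wW w1 assms by (simp add: divide_simps) (smt (verit) mult_mono)
    have "Q m s = c * ((1+w)/(a-1-w)) * (m/w)" unfolding Q_def w_def[symmetric] by simp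
    also have "\<dots> \<le> c * ((1+W0)/(a-1-W0)) * (sqrt(2*K0) * (1/sqrt(\<beta>^2 - s^2)))"
      using r mw c_pos w1 assms by (intro mult_mono mult_left_mono) auto
    also have "\<dots> = C * (1/sqrt(\<beta>^2-s^2))" unfolding C_def by simp
    finally show ?thesis .
  qed
  have Qint: "(Q m) integrable_on {-1..1}"
    using Q_cont1[of m] assms EFa by (intro integrable_continuous_real) auto
  show ?thesis unfolding T_def BdC
    by (rule has_integral_le[OF integrable_integral[OF Qint] int bound])
qed


lemma Q_pos: assumes "0 < m" "m < a-1" "E m < Fa" "\<bar>s\<bar> \<le> 1" shows "Q m s > 0"
proof -
  note YR = Y_range[OF assms]
  show ?thesis unfolding Q_def using YR assms c_pos by (auto intro!: divide_pos_pos mult_pos_pos)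
qed

lemma T_lower: assumes "0 < ml" "ml \<le> m" "m < a-1" "E m < Fa"
  shows "T m \<ge> c * sqrt (ml/(2*(2*a))) * (ln (sqrt (Fa - E m) + m) - ln (sqrt (Fa - E m)))"
proof -
  define \<kappa> where "\<kappa> = ml/(2*(2*a))"
  define d where "d = sqrt (Fa - E m)"
  have m0: "0 < m" using assms by simp
  have kpos: "\<kappa> > 0" unfolding \<kappa>_def using assms a_gt by simp
  have dpos: "d > 0" unfolding d_def using assms by simp
  have d2: "d^2 = Fa - E m" unfolding d_def using assms by simp
  define g where "g s = c * sqrt \<kappa> * (m / (d + m* s))" for s
  have gint: "(g has_integral (c * sqrt \<kappa> * (ln (d + m) - ln d))) {0..1}"
  proof -
    have "(g has_integral ((\<lambda>s. c * sqrt \<kappa> * ln (d + m* s)) 1 - (\<lambda>s. c * sqrt \<kappa> * ln (d + m* s)) 0)) {0..1}"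
    proof (rule fundamental_theorem_of_calculus)
      show "0 \<le> (1::real)" by simp
      fix x :: real assume "x \<in> {0..1}"
      then have pos: "d + m*x > 0" using dpos m0 by (simp add: add_pos_nonneg)
      have "((\<lambda>s. c * sqrt \<kappa> * ln (d + m* s)) has_real_derivative g x) (at x)"
      proof -
        have "((\<lambda>s. c * sqrt \<kappa> * ln (d + m* s)) has_real_derivative c * sqrt \<kappa> * (m / (d + m*x))) (at x)"
          using pos by (auto intro!: derivative_eq_intros)
        then show ?thesis unfolding g_def .
      qed
      then show "((\<lambda>s. c * sqrt \<kappa> * ln (d + m* s)) has_vector_derivative g x) (at x within {0..1})"
        using has_field_derivative_at_within by (simp add: has_real_derivative_iff_has_vector_derivative[symmetric])
    qed
    then show ?thesis by (simp add: algebra_simps)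
  qed
  have bound: "g s \<le> Q m s" if s: "s \<in> {0..1}" for s
  proof -
    have sa: "\<bar>s\<bar> \<le> 1" using s by auto
    note YR = Y_range[OF m0 assms(3,4) sa]
    define w where "w = Finv (Y m s)"
    have w1: "m \<le> w" "w < a-1" "F w = Y m s" using YR unfolding w_def by auto
    have "\<kappa> * (a-1-w)^2 \<le> Fa - F w" unfolding \<kappa>_def Fa_def
      using F_top[of ml w] assms w1 by simp
    also have "\<dots> = d^2 + m^2 * s^2/2" unfolding d2 using w1 unfolding Y_def by simp
    also have "\<dots> \<le> (d + m* s)^2"
    proof -
      have "0 \<le> d*m* s" using dpos m0 s by simp
      moreover have "0 \<le> m^2 * s^2" by simp
      moreover have "(d + m* s)^2 = d^2 + 2*(d*m* s) + m^2 * s^2" by (simp add: power2_eq_square algebra_simps)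
      ultimately show ?thesis by linarith
    qed
    finally have f1: "\<kappa> * (a-1-w)^2 \<le> (d + m* s)^2" .
    have "(sqrt \<kappa> * (a-1-w))^2 = \<kappa> * (a-1-w)^2" using kpos by (simp add: power_mult_distrib)
    with f1 have f2: "(sqrt \<kappa> * (a-1-w))^2 \<le> (d + m* s)^2" by simp
    have "0 \<le> d + m* s" using dpos m0 s by simp
    from power2_le_imp_le[OF f2 this] have le: "sqrt \<kappa> * (a-1-w) \<le> d + m* s" .
    have aw: "a-1-w > 0" using w1 by simp
    have "g s = c * (m / ((d + m* s)/sqrt \<kappa>))" unfolding g_def using kpos by (simp add: field_simps)
    also have "\<dots> \<le> c * (m / (a-1-w))"
    proof -
      have "a-1-w \<le> (d + m* s)/sqrt \<kappa>" using le kpos by (simp add: field_simps)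
      moreover have "0 < ((d + m* s)/sqrt \<kappa>) * (a-1-w)"
        using aw dpos m0 s kpos by (intro mult_pos_pos divide_pos_pos add_pos_nonneg) auto
      ultimately have "m / ((d + m* s)/sqrt \<kappa>) \<le> m / (a-1-w)" using m0 by (intro divide_left_mono) auto
      then show ?thesis using c_pos by (intro mult_left_mono) auto
    qed
    also have "\<dots> \<le> c * (m * ((1+w)/w) / (a-1-w))"
    proof -
      have "1 \<le> (1+w)/w" using w1 m0 by (simp add: divide_simps)
      then have "m \<le> m * ((1+w)/w)" using m0 by (metis mult.right_neutral mult_left_mono less_imp_le)
      then show ?thesis using aw c_pos by (intro mult_left_mono divide_right_mono) auto
    qed
    also have "\<dots> = Q m s" unfolding Q_def w_def[symmetric] by (simp add: field_simps)
    finally show ?thesis .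
  qed
  have Qint: "(Q m) integrable_on {-1..1}"
    using Q_cont1[of m] assms m0 by (intro integrable_continuous_real) auto
  have i1: "(Q m) integrable_on {-1..0}" "(Q m) integrable_on {0..1}"
    using integrable_on_subinterval[OF Qint] by auto
  have "integral {-1..1} (Q m) = integral {-1..0} (Q m) + integral {0..1} (Q m)"
    using Henstock_Kurzweil_Integration.integral_combine[where a="-1" and c=0 and b=1 and f="Q m"] Qint by simp
  moreover have "integral {-1..0} (Q m) \<ge> 0"
    using i1 Q_pos[OF m0 assms(3,4)] by (intro integral_nonneg) (auto intro: less_imp_le)
  moreover have "integral {0..1} (Q m) \<ge> c * sqrt \<kappa> * (ln (d + m) - ln d)"
    using has_integral_le[OF gint integrable_integral[OF i1(2)] bound] by simp
  ultimately show ?thesis unfolding T_def \<kappa>_def d_def by simp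
qed


lemma Bd_cont: "isCont Bd 0"
proof -
  let ?g = "\<lambda>W. 1/sqrt(1+2*kp W)"
  have kp0: "kp 0 > 0" unfolding kp_def using a_gt by (auto intro!: divide_pos_pos)
  have kpc: "isCont kp 0" unfolding kp_def[abs_def] using a_gt by (intro continuous_intros) auto
  have g: "isCont ?g 0" by (intro continuous_intros kpc) (use kp0 in auto)
  have g0: "0 < ?g 0" "?g 0 < 1" using kp0 by auto
  then have g0': "-1 < ?g 0" by linarith
  have "isCont (\<lambda>W. arcsin (?g W)) 0" by (rule isCont_o2[OF g isCont_arcsin[OF g0' g0(2)]])
  then have h2: "isCont (\<lambda>W. 2 * arcsin (?g W)) 0" by (intro isCont_mult[OF continuous_const])
  have h1: "isCont (\<lambda>W. c*(1+W)/(a-1-W) * sqrt(2*K0)) 0" using a_gt by (intro continuous_intros) auto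
  have "isCont (\<lambda>W. c*(1+W)/(a-1-W) * sqrt(2*K0) * (2*arcsin(?g W))) 0"
    by (rule isCont_mult[OF h1 h2])
  then show ?thesis unfolding Bd_def[abs_def] .
qed

lemma exists_m: assumes B0: "Bd 0 < 1" shows "\<exists>m. 0 < m \<and> m < a-1 \<and> E m < Fa \<and> T m = 1"
proof -
  obtain ms where ms: "0 < ms" "ms < a-1" "E ms = Fa" using ms_ex by blast
  define ml where "ml = ms/2"
  have ml: "0 < ml" "ml < ms" unfolding ml_def using ms by auto
  define \<kappa> where "\<kappa> = ml/(2*(2*a))"
  define L where "L = c * sqrt \<kappa>"
  have Lpos: "L > 0" unfolding L_def \<kappa>_def using ml a_gt c_pos by auto
  define d0 where "d0 = ml * exp (-1/L)"
  have d0pos: "d0 > 0" unfolding d0_def using ml by simp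
  obtain \<delta> where \<delta>: "\<delta> > 0" "\<And>x. x \<in> {0..a-1} \<Longrightarrow> dist x ms < \<delta> \<Longrightarrow> dist (E x) (E ms) < d0^2"
    using E_cont ms d0pos unfolding continuous_on_iff
    by (metis atLeastAtMost_iff less_imp_le zero_less_power)
  define m2 where "m2 = max ml (ms - \<delta>/2)"
  have m2: "ml \<le> m2" "m2 < ms" "0 < m2" unfolding m2_def using ml \<delta> by auto
  have Em2: "E m2 < Fa" using E_strict[of m2 ms] m2 ms by simp
  have "dist (E m2) (E ms) < d0^2" using \<delta>(2)[of m2] m2 ms \<delta>(1) unfolding m2_def by (auto simp: dist_real_def)
  then have Dsmall: "Fa - E m2 < d0^2" using Em2 ms by (simp add: dist_real_def)
  define d where "d = sqrt (Fa - E m2)"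
  have dpos: "d > 0" unfolding d_def using Em2 by simp
  have dd0: "d < d0" unfolding d_def using Dsmall d0pos
    by (metis real_sqrt_abs real_sqrt_less_mono abs_of_pos)
  have "ln (d + m2) \<ge> ln ml" using m2 ml dpos by simp
  moreover have "ln d < ln d0" using dd0 dpos by simp
  moreover have "ln d0 = ln ml - 1/L" unfolding d0_def using ml by (simp add: ln_mult)
  ultimately have "ln (d + m2) - ln d > 1/L" by linarith
  then have "L * (ln (d + m2) - ln d) > L * (1/L)" using Lpos by (intro mult_strict_left_mono) auto
  then have big: "L * (ln (d + m2) - ln d) > 1" using Lpos by simp
  have T2: "T m2 > 1"
    using T_lower[of ml m2] ml m2 ms Em2 big unfolding L_def \<kappa>_def d_def by simp
  have "\<forall>\<^sub>F W in at 0. Bd W < 1" using Bd_cont B0 unfolding isCont_def by (rule order_tendstoD(2))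
  then obtain e where e: "e > 0" "\<And>W. W \<noteq> 0 \<Longrightarrow> dist W 0 < e \<Longrightarrow> Bd W < 1"
    unfolding eventually_at by auto
  define W0 where "W0 = min (e/2) ((a-1)/2)"
  have W0a: "0 < W0" "W0 < e" "W0 < a-1" unfolding W0_def using e a_gt by (auto simp: min_def)
  have W0: "0 < W0" "W0 < a-1" "Bd W0 < 1" using W0a e(2)[of W0] by (auto simp: dist_real_def)
  have FW0: "F W0 > 0" using F_pos W0 by simp
  obtain \<delta>1 where \<delta>1: "\<delta>1 > 0" "\<And>x. x \<in> {0..a-1} \<Longrightarrow> dist x 0 < \<delta>1 \<Longrightarrow> dist (E x) (E 0) < F W0"
    using E_cont FW0 a_gt unfolding continuous_on_iff by (metis atLeastAtMost_iff less_imp_le diff_gt_0_iff_gt order_refl)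
  define m1 where "m1 = min (\<delta>1/2) (ml/2)"
  have m1: "0 < m1" "m1 < ml" "m1 < a-1" unfolding m1_def using \<delta>1 ml ms by auto
  have "dist (E m1) (E 0) < F W0" using \<delta>1(2)[of m1] m1 \<delta>1(1) unfolding m1_def by (auto simp: dist_real_def)
  then have "E m1 \<le> F W0" using E0 by (simp add: dist_real_def)
  then have T1: "T m1 < 1" using T_upper[of m1 W0] m1 W0 by simp
  have Tc: "continuous_on {m1..m2} T" using T_cont[of m1 m2] m1 m2 ms Em2 by simp
  obtain m where m: "m1 \<le> m" "m \<le> m2" "T m = 1"
    using IVT'[of T m1 1 m2, OF _ _ _ Tc] T1 T2 m1 m2 by auto
  have "E m \<le> E m2" using m m1 m2 ms by (intro E_mono) auto
  then show ?thesis using m m1 m2 ms Em2 by (intro exI[of _ m]) auto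
qed


lemma Y_deriv: "((Y m) has_real_derivative (- (m^2 * x))) (at x)"
  unfolding Y_def[abs_def] by (auto intro!: derivative_eq_intros)

lemma construct: assumes m: "0 < m" "m < a-1" "E m < Fa" "T m = 1"
  shows "\<exists>u v :: real \<Rightarrow> real.
           (\<forall>x\<in>{0..1}. 1 + u x + v x \<noteq> 0) \<and>
           (\<forall>x\<in>{0..1}. ((\<lambda>y. c * u y) has_real_derivative
                (a * v x / (1 + u x + v x) - u x)) (at x within {0..1})) \<and>
           (\<forall>x\<in>{0..1}. ((\<lambda>y. - (c * v y)) has_real_derivative
                (a * u x / (1 + u x + v x) - v x)) (at x within {0..1})) \<and>
           u 0 = 0 \<and> v 1 = 0 \<and>
           (\<exists>x\<in>{0..1}. u x \<noteq> 0 \<or> v x \<noteq> 0)"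
proof -
  have Fm: "F m > 0" using F_pos m by simp
  define \<rho> where "\<rho> = sqrt (1 + F m / m^2)"
  have rho1: "\<rho> > 1" unfolding \<rho>_def using Fm m by simp
  have rho2: "\<rho>^2 = 1 + F m / m^2" unfolding \<rho>_def using Fm m by (simp add: add_pos_nonneg)
  have YR: "0 < Y m s" "Y m s < Fa" "0 < Finv (Y m s)" "Finv (Y m s) < a-1" "F (Finv (Y m s)) = Y m s"
    if s: "s \<in> {-\<rho>..\<rho>}" for s
  proof -
    have "\<bar>s\<bar> \<le> \<rho>" using s by auto
    then have "s^2 \<le> \<rho>^2" using abs_le_square_iff[of s \<rho>] rho1 by simp
    then have "m^2 * s^2 \<le> m^2 * \<rho>^2" by (simp add: mult_left_mono)
    also have "m^2 * \<rho>^2 = m^2 + F m" unfolding rho2 using m by (simp add: field_simps)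
    finally have "Y m s \<ge> F m / 2" unfolding Y_def E_def by simp
    then show "0 < Y m s" using Fm by simp
    have "0 \<le> m^2 * s^2" by simp
    then show "Y m s < Fa" unfolding Y_def using m by linarith
    then show "0 < Finv (Y m s)" "Finv (Y m s) < a-1" "F (Finv (Y m s)) = Y m s"
      using Finv_open Finv_props \<open>0 < Y m s\<close> by auto
  qed
  have Qc: "continuous_on {-\<rho>..\<rho>} (Q m)"
  proof -
    have cY: "continuous_on {-\<rho>..\<rho>} (Y m)" unfolding Y_def[abs_def] by (intro continuous_intros) auto
    have cG: "continuous_on {-\<rho>..\<rho>} (\<lambda>s. Finv (Y m s))"
    proof (rule continuous_on_compose2[OF Finv_cont cY])
      show "Y m ` {-\<rho>..\<rho>} \<subseteq> {0..Fa}"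
      proof
        fix y assume "y \<in> Y m ` {-\<rho>..\<rho>}"
        then obtain s where s: "s \<in> {-\<rho>..\<rho>}" "y = Y m s" by blast
        from YR(1,2)[OF s(1)] s(2) show "y \<in> {0..Fa}" by simp
      qed
    qed
    have nz: "\<forall>s\<in>{-\<rho>..\<rho>}. (a-1 - Finv (Y m s)) * Finv (Y m s) \<noteq> 0"
    proof
      fix s assume "s \<in> {-\<rho>..\<rho>}"
      from YR(3,4)[OF this] show "(a-1 - Finv (Y m s)) * Finv (Y m s) \<noteq> 0" by simp
    qed
    have "continuous_on {-\<rho>..\<rho>} (\<lambda>s. m*c*(1 + Finv (Y m s)) / ((a-1 - Finv (Y m s)) * Finv (Y m s)))"
      by (rule continuous_on_divide[OF _ _ nz]) (intro continuous_intros cG)+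
    then show ?thesis unfolding Q_def[abs_def] .
  qed
  have Qp: "Q m s > 0" if "s \<in> {-\<rho>..\<rho>}" for s
  proof -
    have "0 < Finv (Y m s)" "Finv (Y m s) < a-1" using YR(3,4)[OF that] by auto
    then show ?thesis unfolding Q_def using m c_pos by (intro divide_pos_pos mult_pos_pos) auto
  qed
  define \<tau> where "\<tau> x = integral {-\<rho>..x} (Q m) - integral {-\<rho>..-1} (Q m)" for x
  have \<tau>d: "(\<tau> has_real_derivative Q m x) (at x)" if x: "x \<in> {-\<rho><..<\<rho>}" for x
  proof -
    have "((\<lambda>u. integral {-\<rho>..u} (Q m)) has_vector_derivative Q m x) (at x within {-\<rho>..\<rho>})"
      using x by (intro integral_has_vector_derivative Qc) auto
    then have "((\<lambda>u. integral {-\<rho>..u} (Q m)) has_vector_derivative Q m x) (at x within {-\<rho><..<\<rho>})"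
      by (rule has_vector_derivative_within_subset) auto
    then have "((\<lambda>u. integral {-\<rho>..u} (Q m)) has_vector_derivative Q m x) (at x)"
      using x has_vector_derivative_within_open[of x "{-\<rho><..<\<rho>}"] open_greaterThanLessThan by blast
    then have "((\<lambda>u. integral {-\<rho>..u} (Q m)) has_real_derivative Q m x) (at x)"
      unfolding has_real_derivative_iff_has_vector_derivative .
    then show ?thesis unfolding \<tau>_def[abs_def] by (auto intro!: derivative_eq_intros)
  qed
  define \<rho>1 where "\<rho>1 = (1+\<rho>)/2"
  have r1: "1 < \<rho>1" "\<rho>1 < \<rho>" unfolding \<rho>1_def using rho1 by auto
  have \<tau>cont: "continuous_on {-\<rho>1..\<rho>1} \<tau>"
  proof (rule DERIV_continuous_on)
    fix x assume "x \<in> {-\<rho>1..\<rho>1}"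
    then have "x \<in> {-\<rho><..<\<rho>}" using r1 by auto
    show "(\<tau> has_field_derivative Q m x) (at x within {-\<rho>1..\<rho>1})"
      by (rule has_field_derivative_at_within[OF \<tau>d[OF \<open>x \<in> {-\<rho><..<\<rho>}\<close>]])
  qed
  have \<tau>strict: "\<tau> x < \<tau> y" if xy: "-\<rho>1 \<le> x" "x < y" "y \<le> \<rho>1" for x y
  proof (rule DERIV_pos_imp_increasing[OF xy(2)])
    fix z assume "x \<le> z" "z \<le> y"
    then have z1: "z \<in> {-\<rho><..<\<rho>}" and z2: "z \<in> {-\<rho>..\<rho>}" using xy r1 by auto
    show "\<exists>d. (\<tau> has_real_derivative d) (at z) \<and> d > 0"
      using \<tau>d[OF z1] Qp[OF z2] by blast
  qed
  have \<tau>m1: "\<tau> (-1) = 0" unfolding \<tau>_def by simp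
  have \<tau>1: "\<tau> 1 = 1"
  proof -
    have "(Q m) integrable_on {-\<rho>..1}" using Qc rho1
      by (intro integrable_continuous_real continuous_on_subset[OF Qc]) auto
    then have "integral {-\<rho>..-1} (Q m) + integral {-1..1} (Q m) = integral {-\<rho>..1} (Q m)"
      using rho1 by (intro Henstock_Kurzweil_Integration.integral_combine) auto
    then show ?thesis unfolding \<tau>_def using m(4) unfolding T_def by simp
  qed
  define A where "A = \<tau> (-\<rho>1)"
  define B where "B = \<tau> \<rho>1"
  have AB: "A < 0" "1 < B" unfolding A_def B_def using \<tau>strict[of "-\<rho>1" "-1"] \<tau>strict[of 1 \<rho>1] r1 \<tau>m1 \<tau>1 by auto
  have inj\<tau>: "inj_on \<tau> {-\<rho>1..\<rho>1}"
  proof (rule inj_onI)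
    fix x y assume "x \<in> {-\<rho>1..\<rho>1}" "y \<in> {-\<rho>1..\<rho>1}" "\<tau> x = \<tau> y"
    then show "x = y" using \<tau>strict[of x y] \<tau>strict[of y x] by (cases x y rule: linorder_cases) auto
  qed
  have img: "\<tau> ` {-\<rho>1..\<rho>1} = {A..B}"
  proof
    show "\<tau> ` {-\<rho>1..\<rho>1} \<subseteq> {A..B}"
    proof
      fix y assume "y \<in> \<tau> ` {-\<rho>1..\<rho>1}"
      then obtain x where x: "x \<in> {-\<rho>1..\<rho>1}" "y = \<tau> x" by auto
      then have "A \<le> \<tau> x" "\<tau> x \<le> B" unfolding A_def B_def
        using \<tau>strict[of "-\<rho>1" x] \<tau>strict[of x \<rho>1] by (cases "x = -\<rho>1"; cases "x = \<rho>1"; force)+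
      then show "y \<in> {A..B}" using x by auto
    qed
    show "{A..B} \<subseteq> \<tau> ` {-\<rho>1..\<rho>1}"
    proof
      fix y assume "y \<in> {A..B}"
      then obtain x where "-\<rho>1 \<le> x" "x \<le> \<rho>1" "\<tau> x = y"
        using IVT'[of \<tau> "-\<rho>1" y \<rho>1, OF _ _ _ \<tau>cont] r1 unfolding A_def B_def by auto
      then show "y \<in> \<tau> ` {-\<rho>1..\<rho>1}" by auto
    qed
  qed
  define \<sigma> where "\<sigma> t = the_inv_into {-\<rho>1..\<rho>1} \<tau> t" for t
  have \<sigma>p: "\<sigma> t \<in> {-\<rho>1..\<rho>1}" "\<tau> (\<sigma> t) = t" if "t \<in> {A..B}" for t
    using that img inj\<tau> unfolding \<sigma>_def by (metis the_inv_into_into order_refl, metis f_the_inv_into_f)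
  have \<sigma>\<tau>: "\<sigma> (\<tau> x) = x" if "x \<in> {-\<rho>1..\<rho>1}" for x
    using that inj\<tau> unfolding \<sigma>_def by (simp add: the_inv_into_f_f)
  have \<sigma>0: "\<sigma> 0 = -1" using \<sigma>\<tau>[of "-1"] \<tau>m1 r1 by simp
  have \<sigma>1: "\<sigma> 1 = 1" using \<sigma>\<tau>[of 1] \<tau>1 r1 by simp
  have \<sigma>cont: "continuous_on {A..B} \<sigma>"
  proof -
    have "continuous_on (\<tau> ` {-\<rho>1..\<rho>1}) \<sigma>"
      by (rule continuous_on_inv[OF \<tau>cont]) (auto simp: \<sigma>\<tau>)
    then show ?thesis using img by simp
  qed
  have \<sigma>d: "(\<sigma> has_real_derivative inverse (Q m (\<sigma> t))) (at t)" if t: "A < t" "t < B" for t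
  proof (rule DERIV_inverse_function[where f=\<tau> and a=A and b=B])
    have "\<sigma> t \<in> {-\<rho>1..\<rho>1}" using \<sigma>p t by auto
    then show "(\<tau> has_real_derivative Q m (\<sigma> t)) (at (\<sigma> t))" using r1 by (intro \<tau>d) auto
    show "Q m (\<sigma> t) \<noteq> 0" using Qp[of "\<sigma> t"] \<open>\<sigma> t \<in> {-\<rho>1..\<rho>1}\<close> r1 by auto
    show "A < t" "t < B" by fact+
    show "\<And>y. A < y \<Longrightarrow> y < B \<Longrightarrow> \<tau> (\<sigma> y) = y" using \<sigma>p by auto
    show "isCont \<sigma> t" using \<sigma>cont t by (intro continuous_on_interior[of "{A..B}"]) auto
  qed
  define z where "z t = m * \<sigma> t" for t
  define W where "W t = Finv (Y m (\<sigma> t))" for t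
  define u where "u t = (W t + z t)/2" for t
  define v where "v t = (W t - z t)/2" for t
  have pt: "0 < W x \<and> W x < a-1 \<and> 1 + u x + v x = 1 + W x \<and>
     ((\<lambda>y. c * u y) has_real_derivative (a * v x / (1 + u x + v x) - u x)) (at x) \<and>
     ((\<lambda>y. - (c * v y)) has_real_derivative (a * u x / (1 + u x + v x) - v x)) (at x)"
    if x: "x \<in> {0..1}" for x
  proof -
    have xAB: "A < x" "x < B" using x AB by auto
    define s where "s = \<sigma> x"
    have s1: "s \<in> {-\<rho>1..\<rho>1}" unfolding s_def using \<sigma>p xAB by auto
    then have s2: "s \<in> {-\<rho>..\<rho>}" using r1 by auto
    define w where "w = W x"
    have w: "0 < w" "w < a-1" unfolding w_def W_def s_def[symmetric] using YR[OF s2] by auto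
    have dsig: "(\<sigma> has_real_derivative inverse (Q m s)) (at x)" unfolding s_def by (rule \<sigma>d[OF xAB])
    have dY: "((\<lambda>t. Y m (\<sigma> t)) has_real_derivative (- (m^2 * s)) * inverse (Q m s)) (at x)"
      using DERIV_chain2[OF Y_deriv[of m "\<sigma> x"] dsig] unfolding s_def by simp
    have dW: "(W has_real_derivative inverse (F' w) * ((- (m^2 * s)) * inverse (Q m s))) (at x)"
    proof -
      have "(Finv has_real_derivative inverse (F' (Finv (Y m s)))) (at (Y m (\<sigma> x)))"
        using Finv_deriv[of "Y m s"] YR[OF s2] unfolding s_def by simp
      from DERIV_chain2[OF this dY] show ?thesis unfolding W_def[abs_def] w_def s_def by simp
    qed
    have dz: "(z has_real_derivative m * inverse (Q m s)) (at x)"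
      unfolding z_def[abs_def] by (auto intro!: derivative_eq_intros dsig)
    have du: "((\<lambda>y. c * u y) has_real_derivative c * ((inverse (F' w) * ((- (m^2 * s)) * inverse (Q m s)) + m * inverse (Q m s))/2)) (at x)"
      unfolding u_def[abs_def] by (auto intro!: derivative_eq_intros dW dz)
    have dv: "((\<lambda>y. - (c * v y)) has_real_derivative - (c * ((inverse (F' w) * ((- (m^2 * s)) * inverse (Q m s)) - m * inverse (Q m s))/2))) (at x)"
      unfolding v_def[abs_def] by (auto intro!: derivative_eq_intros dW dz)
    have Qeq: "Q m s = m*c*(1+w)/((a-1-w)*w)" unfolding Q_def w_def W_def s_def by simp
    have Feq: "F' w = w*(a-1-w)/(w+1+a)" unfolding F'_def by simp
    have uvx: "u x = (w + m * s)/2" "v x = (w - m * s)/2" unfolding u_def v_def w_def z_def s_def by auto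
    have nz: "w \<noteq> 0" "a-1-w \<noteq> 0" "1+w \<noteq> 0" "w+1+a \<noteq> 0" "m \<noteq> 0" "c \<noteq> 0" using w m c_pos by auto
    note AL = alg1g[where w=w and q="a-1-w" and p="1+w" and r="w+1+a" and m=m and c=c and a=a and s=s, OF nz refl refl refl]
    show ?thesis
    proof (intro conjI)
      show "0 < W x" "W x < a-1" using w unfolding w_def by auto
      show "1 + u x + v x = 1 + W x" unfolding u_def v_def by (simp add: field_simps)
      show "((\<lambda>y. c * u y) has_real_derivative (a * v x / (1 + u x + v x) - u x)) (at x)"
        using du[unfolded Qeq Feq AL(1)] unfolding uvx .
      show "((\<lambda>y. - (c * v y)) has_real_derivative (a * u x / (1 + u x + v x) - v x)) (at x)"
        using dv[unfolded Qeq Feq AL(2)] unfolding uvx .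
    qed
  qed
  have W0: "W 0 = m" "z 0 = - m" unfolding W_def z_def \<sigma>0 
    using Finv_F[of m] m unfolding Y_def E_def by auto
  have W1: "W 1 = m" "z 1 = m" unfolding W_def z_def \<sigma>1
    using Finv_F[of m] m unfolding Y_def E_def by auto
  have P1: "\<forall>x\<in>{0..1}. 1 + u x + v x \<noteq> 0" using pt by force
  have P2: "\<forall>x\<in>{0..1}. ((\<lambda>y. c * u y) has_real_derivative (a * v x / (1 + u x + v x) - u x)) (at x within {0..1})"
    using pt by (blast intro: has_field_derivative_at_within)
  have P3: "\<forall>x\<in>{0..1}. ((\<lambda>y. - (c * v y)) has_real_derivative (a * u x / (1 + u x + v x) - v x)) (at x within {0..1})"
    using pt by (blast intro: has_field_derivative_at_within)
  have P4: "u 0 = 0" unfolding u_def using W0 by simp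
  have P5: "v 1 = 0" unfolding v_def using W1 by simp
  have P6: "\<exists>x\<in>{0..1}. u x \<noteq> 0 \<or> v x \<noteq> 0"
    using W1 m by (intro bexI[of _ 1]) (auto simp: u_def)
  show ?thesis using P1 P2 P3 P4 P5 P6 by blast
qed

end

lemma Bd0_eq: assumes "sys a c"
  shows "sys.Bd a c 0 = c * (2*arcsin(sqrt((a+1)/(2*a)))) / sqrt(a^2-1)"
proof -
  have a: "a > 1" using assms unfolding sys_def by simp
  have e1: "1 + 2 * sys.kp a 0 = 2*a/(1+a)" unfolding sys.kp_def[OF assms] using a by (simp add: field_simps)
  have e2: "1/sqrt(2*a/(1+a)) = sqrt((a+1)/(2*a))" using a by (simp add: real_sqrt_divide)
  have e3: "sqrt (2 * sys.K0 a) / (a-1) = 1 / sqrt(a^2-1)"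
  proof -
    have "2 * sys.K0 a = (a-1)/(a+1)" unfolding sys.K0_def[OF assms] using a by (simp add: field_simps)
    then have "sqrt (2 * sys.K0 a) = sqrt(a-1)/sqrt(a+1)" by (simp add: real_sqrt_divide)
    moreover have "a-1 = sqrt(a-1) * sqrt(a-1)" using a by simp
    moreover have "sqrt(a^2-1) = sqrt(a-1) * sqrt(a+1)" by (simp add: real_sqrt_mult[symmetric] power2_eq_square algebra_simps)
    moreover have "sqrt(a-1) > 0" "sqrt(a+1) > 0" using a by auto
    ultimately show ?thesis by (simp add: field_simps)
  qed
  have "sys.Bd a c 0 = c * (sqrt (2 * sys.K0 a) / (a-1)) * (2*arcsin(1/sqrt(1+2* sys.kp a 0)))"
    unfolding sys.Bd_def[OF assms] by simp
  also have "\<dots> = c * (2*arcsin(sqrt((a+1)/(2*a)))) / sqrt(a^2-1)" unfolding e1 e2 e3 by simp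
  finally show ?thesis .
qed

theorem mainTheorem7:
  fixes c b0 \<alpha> :: real
  assumes c_pos: "c > 0"
    and b0_range: "b0 \<in> {pi/2<..<pi}"
    and b0_sol: "c * b0 + tan b0 = 0"
    and b0_min: "\<forall>b. 0 < b \<and> b < b0 \<longrightarrow> c * b + tan b \<noteq> 0"
    and alpha_gt: "\<alpha> > 1 / \<bar>cos b0\<bar>"
  shows "\<exists>u v :: real \<Rightarrow> real.
           (\<forall>x\<in>{0..1}. 1 + u x + v x \<noteq> 0) \<and>
           (\<forall>x\<in>{0..1}. ((\<lambda>y. c * u y) has_real_derivative
                (\<alpha> * v x / (1 + u x + v x) - u x)) (at x within {0..1})) \<and>
           (\<forall>x\<in>{0..1}. ((\<lambda>y. - (c * v y)) has_real_derivative
                (\<alpha> * u x / (1 + u x + v x) - v x)) (at x within {0..1})) \<and>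
           u 0 = 0 \<and> v 1 = 0 \<and>
           (\<exists>x\<in>{0..1}. u x \<noteq> 0 \<or> v x \<noteq> 0)"
proof -
  have b: "pi/2 < b0" "b0 < pi" using b0_range by auto
  define cb where "cb = - cos b0"
  have cbpos: "cb > 0" unfolding cb_def using cos_gt_zero_pi[of "pi - b0"] b by (simp add: cos_pi_minus)
  have sb: "sin b0 > 0" using sin_gt_zero[of b0] b by simp
  have sc: "sin b0 ^ 2 + cb^2 = 1" unfolding cb_def by simp
  have cb1: "cb < 1"
  proof -
    have "cb^2 < 1" using sc sb by (smt (verit) zero_less_power)
    then show ?thesis using cbpos by (smt (verit) one_le_power)
  qed
  define a0 where "a0 = 1/cb"
  have abs_cb: "\<bar>cos b0\<bar> = cb" unfolding cb_def using cbpos cb_def by simp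
  have a0gt: "a0 > 1" unfolding a0_def using cbpos cb1 by simp
  have aa0: "\<alpha> > a0" using alpha_gt abs_cb unfolding a0_def by simp
  have a1: "\<alpha> > 1" using aa0 a0gt by simp
  interpret S: sys \<alpha> c using a1 c_pos by unfold_locales
  have sysI: "sys \<alpha> c" using a1 c_pos by unfold_locales
  have A1: "2*arcsin(sqrt((\<alpha>+1)/(2*\<alpha>))) < b0"
  proof -
    have "(\<alpha>+1)/(2*\<alpha>) = 1/2 + 1/(2*\<alpha>)" using a1 by (simp add: field_simps)
    moreover have "(a0+1)/(2*a0) = 1/2 + 1/(2*a0)" using a0gt by (simp add: field_simps)
    moreover have "1/(2*\<alpha>) < 1/(2*a0)" using aa0 a0gt by (simp add: divide_simps)
    ultimately have lt: "(\<alpha>+1)/(2*\<alpha>) < (a0+1)/(2*a0)" by simp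
    have "(a0+1)/(2*a0) = (1 + cb)/2" unfolding a0_def using cbpos by (simp add: field_simps)
    also have "\<dots> = sin (b0/2) ^ 2" using cos_double_sin[of "b0/2"] unfolding cb_def by simp
    finally have eq: "(a0+1)/(2*a0) = sin (b0/2) ^ 2" .
    have sb2: "sin (b0/2) > 0" using sin_gt_zero[of "b0/2"] b by simp
    have "sqrt((\<alpha>+1)/(2*\<alpha>)) < sqrt((a0+1)/(2*a0))" using lt by simp
    also have "\<dots> = sin (b0/2)" unfolding eq using sb2 by simp
    finally have l2: "sqrt((\<alpha>+1)/(2*\<alpha>)) < sin (b0/2)" .
    have "arcsin (sqrt((\<alpha>+1)/(2*\<alpha>))) < arcsin (sin (b0/2))"
      using l2 sin_le_one[of "b0/2"] a1 by (intro arcsin_less_arcsin) (auto intro: order_trans[OF _ real_sqrt_ge_zero])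
    also have "arcsin (sin (b0/2)) = b0/2" using b by (intro arcsin_sin) auto
    finally show ?thesis by simp
  qed
  have A2: "c * b0 < sqrt(\<alpha>^2-1)"
  proof -
    have "c * b0 = sin b0 / cb" using b0_sol unfolding tan_def cb_def by (simp add: field_simps)
    also have "\<dots> = sqrt(a0^2 - 1)"
    proof -
      have "a0^2 - 1 = (sin b0 / cb)^2" unfolding a0_def using sc cbpos by (simp add: field_simps)
      then show ?thesis using sb cbpos by simp
    qed
    also have "\<dots> < sqrt(\<alpha>^2-1)" using aa0 a0gt by (simp add: power_strict_mono)
    finally show ?thesis .
  qed
  have "S.Bd 0 < 1"
  proof -
    have "1 < \<alpha>^2" using one_less_power[OF a1, of 2] by simp
    then have sq: "sqrt(\<alpha>^2-1) > 0" by simp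
    have "S.Bd 0 = c * (2*arcsin(sqrt((\<alpha>+1)/(2*\<alpha>)))) / sqrt(\<alpha>^2-1)" by (rule Bd0_eq[OF sysI])
    also have "\<dots> < c * b0 / sqrt(\<alpha>^2-1)" using A1 c_pos sq by (simp add: divide_strict_right_mono)
    also have "\<dots> < 1" using A2 sq by simp
    finally show ?thesis .
  qed
  then obtain m where m: "0 < m" "m < \<alpha>-1" "S.E m < S.Fa" "S.T m = 1" using S.exists_m by blast
  show ?thesis by (rule S.construct[OF m])
qed

end
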